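(* The target counital subalgebra of the quantum groupoid $H_\mathcal{C}$ is $$H_t(H_\mathcal{C})=\mathrm{span}_a\Big\{\sum_{k,b}\frac{\sqrt{d_k}}{\sqrt{d_a}}\,e^{ab}_{k;ab}\Big\},$$ where $a$ ranges over $Irr(\mathcal{C})$, and the inner sum is over $k,b\in Irr(\mathcal{C})$ with $(a,k,b)$ admissible. Moreover $\dim_\mathbb{C}H_t(H_\mathcal{C})=\dim_\mathbb{C}V_{\mathbf{1}}$, so $H_t(H_\mathcal{C})\cong V_{\mathbf{1}}$ as $H_\mathcal{C}$-modules. In particular the tensor unit $H_t(H_\mathcal{C})$ of $Rep(H_\mathcal{C})$ is simple.
   Context: Let $\mathcal{C}$ be a unitary fusion category that is multiplicity-free, whose simple objects are self-dual, and whose Frobenius–Schur indicators are trivial. Choose its $F$-matrices to be unitary, and normalize theta symbols as $\theta(a,b,c)=\sqrt{d_ad_bd_c}$, where $d_a$ is the quantum dimension of $a$ and $Irr(\mathcal{C})$ is the set of simple objects. The Kitaev–Kong $C^*$-quantum groupoid (weak Hopf algebra) is $$H_\mathcal{C}=\bigoplus_{a,b,c,d,i\in Irr(\mathcal{C})}Hom(b,a\otimes i)\otimes Hom(i\otimes d,c).$$ It has basis vectors $e^{ab}_{i;cd}$, pictured as an "H"-shaped graph: left vertical edge labelled $a$ on top and $b$ on the bottom, right vertical edge labelled $c$ on top and $d$ on the bottom, and horizontal rung labelled $i$. The structure maps are as follows. - Multiplication: $e^{ab}_{i;cd}\,e^{a'b'}_{i';c'd'}=\frac{\delta_{c,a'}\delta_{d,b'}\delta_{i,i'}}{\sqrt{d_i}}\,e^{ab}_{i;c'd'}$.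 - Unit: $\eta=\sum_{a,b,i}\sqrt{d_i}\,e^{ab}_{i;ab}$. - Counit: $\varepsilon(e^{ab}_{i;cd})=\delta_{a,b}\delta_{c,d}\delta_{i,\mathbf{1}}$. - Comultiplication: $$\Delta(e^{ab}_{i;cd})=\sum_{j,k,p,q}\frac{\sqrt{d_jd_k}}{\sqrt{d_i}}F^{ajk}_{b;ip}F^{dkj}_{c;iq}\;e^{ap}_{j;cq}\otimes e^{pb}_{k;qd},$$ where $j,k$ range over labels admissible with $i$. - Antipode: $S(e^{ab}_{i;cd})=\frac{\sqrt{d_bd_c}}{\sqrt{d_ad_d}}e^{dc}_{i;ba}$. - Star: $(e^{ab}_{i;cd})^*=e^{cd}_{i;ab}$. The target counital map is $\varepsilon_t(h)=\varepsilon(\eta_{(1)}h)\eta_{(2)}$ (Sweedler notation $\Delta(\eta)=\eta_{(1)}\otimes\eta_{(2)}$). The target counital subalgebra is $H_t=\varepsilon_t(H_\mathcal{C})$. It is the tensor unit of $Rep(H_\mathcal{C})$, with action $h\cdot z=\varepsilon_t(hz)$. For $i\in Irr(\mathcal{C})$, let $V_i=\mathrm{span}\{v^{ab}_i : (i,a,b)\text{ admissible}\}$, where $v^{ab}_i$ is a trivalent vertex with legs labelled $a,b,i$. Its $H_\mathcal{C}$-module structure is $e^{ab}_{j;cd}\cdot v^{pq}_i=\frac{\delta_{i,j}\delta_{c,p}\delta_{d,q}}{\sqrt{d_i}}v^{ab}_i$. The $V_i$ are the simple $H_\mathcal{C}$-modules. *)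

theory Defs
  imports "HOL-Analysis.Analysis" "HOL-Library.Function_Algebras"
begin

text \<open>Labels (simple objects of the fusion category) form a finite type 'l.
  adm a b c  means  Hom(c, a \<otimes> b) \<noteq> 0  (multiplicity-free, so it is then 1-dimensional).
  F a j k b i p  is the F-symbol  F^{ajk}_{b;ip}  of the paper: a basis change for Hom(b, a\<otimes>j\<otimes>k),
  with p the channel of a\<otimes>j and i the channel of j\<otimes>k.\<close>

definition fusion_data ::
  "'l::finite \<Rightarrow> ('l \<Rightarrow> 'l \<Rightarrow> 'l \<Rightarrow> bool) \<Rightarrow> ('l \<Rightarrow> real)
    \<Rightarrow> ('l \<Rightarrow> 'l \<Rightarrow> 'l \<Rightarrow> 'l \<Rightarrow> 'l \<Rightarrow> 'l \<Rightarrow> complex) \<Rightarrow> bool" where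
  "fusion_data one adm d F \<longleftrightarrow>
     \<comment> \<open>all simple objects self-dual: the fusion coefficients are totally symmetric\<close>
     (\<forall>a b c. adm a b c \<longrightarrow> adm b a c) \<and>
     (\<forall>a b c. adm a b c \<longrightarrow> adm a c b) \<and>
     \<comment> \<open>unit object\<close>
     (\<forall>a b. adm a one b \<longleftrightarrow> a = b) \<and>
     \<comment> \<open>associativity of the fusion rules\<close>
     (\<forall>a b c e. card {f. adm a b f \<and> adm f c e} = card {g. adm b c g \<and> adm a g e}) \<and>
     \<comment> \<open>quantum dimensions (unitary case: positive, multiplicative on fusion rules)\<close>
     d one = 1 \<and> (\<forall>a. d a > 0) \<and>
     (\<forall>a b. d a * d b = (\<Sum>c\<in>{c. adm a b c}. d c)) \<and>
     \<comment> \<open>F-symbols vanish outside admissible configurations\<close>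
     (\<forall>a j k b i p. F a j k b i p \<noteq> 0 \<longrightarrow>
         adm a j p \<and> adm p k b \<and> adm j k i \<and> adm a i b) \<and>
     \<comment> \<open>F-matrices are unitary\<close>
     (\<forall>a j k b i i'. adm j k i \<and> adm a i b \<and> adm j k i' \<and> adm a i' b \<longrightarrow>
         (\<Sum>p\<in>UNIV. F a j k b i p * cnj (F a j k b i' p)) = (if i = i' then 1 else 0)) \<and>
     (\<forall>a j k b p p'. adm a j p \<and> adm p k b \<and> adm a j p' \<and> adm p' k b \<longrightarrow>
         (\<Sum>i\<in>UNIV. F a j k b i p * cnj (F a j k b i p')) = (if p = p' then 1 else 0)) \<and>
     \<comment> \<open>normalization: F-moves involving the unit object are trivial\<close>
     (\<forall>a j k b i p. adm a j p \<and> adm p k b \<and> adm j k i \<and> adm a i b \<and>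
         (a = one \<or> j = one \<or> k = one) \<longrightarrow> F a j k b i p = 1) \<and>
     \<comment> \<open>pentagon equation\<close>
     (\<forall>a b c d' e f g k l.
         F f c d' e l g * F a b l e k f =
         (\<Sum>h\<in>UNIV. F a b c g h f * F a h d' e k g * F b c d' k l h)) \<and>
     \<comment> \<open>trivial Frobenius-Schur indicators\<close>
     (\<forall>a. complex_of_real (d a) * F a a a a one one = 1)"

text \<open>Index tuples (a,b,i,c,d) of the basis vectors e^{ab}_{i;cd} of H_C.\<close>
type_synonym 'l hidx = "'l \<times> 'l \<times> 'l \<times> 'l \<times> 'l"

definition admH :: "('l \<Rightarrow> 'l \<Rightarrow> 'l \<Rightarrow> bool) \<Rightarrow> 'l hidx \<Rightarrow> bool" where
  "admH adm t = (case t of (a, b, i, c, d) \<Rightarrow> adm a i b \<and> adm i d c)"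

text \<open>Elements of H_C: complex coefficient functions supported on admissible index tuples.\<close>
definition Hspace :: "('l \<Rightarrow> 'l \<Rightarrow> 'l \<Rightarrow> bool) \<Rightarrow> ('l hidx \<Rightarrow> complex) set" where
  "Hspace adm = {x. \<forall>t. \<not> admH adm t \<longrightarrow> x t = 0}"

definition cscale :: "complex \<Rightarrow> ('x \<Rightarrow> complex) \<Rightarrow> ('x \<Rightarrow> complex)" where
  "cscale c f = (\<lambda>x. c * f x)"

definition ebasis :: "('l \<Rightarrow> 'l \<Rightarrow> 'l \<Rightarrow> bool) \<Rightarrow> 'l hidx \<Rightarrow> ('l hidx \<Rightarrow> complex)" where
  "ebasis adm t = (\<lambda>s. if s = t \<and> admH adm t then 1 else 0)"

abbreviation sq :: "real \<Rightarrow> complex" where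
  "sq x \<equiv> complex_of_real (sqrt x)"

text \<open>Multiplication: e^{ab}_{i;cd} e^{a'b'}_{i';c'd'} = \<delta>_{c a'} \<delta>_{d b'} \<delta>_{i i'} / sqrt d_i  e^{ab}_{i;c'd'}.\<close>
definition Hmult :: "('l::finite \<Rightarrow> real) \<Rightarrow> ('l hidx \<Rightarrow> complex) \<Rightarrow> ('l hidx \<Rightarrow> complex)
     \<Rightarrow> ('l hidx \<Rightarrow> complex)" where
  "Hmult d x y = (\<lambda>(a, b, i, c', d').
      (\<Sum>(c, e)\<in>UNIV. x (a, b, i, c, e) * y (c, e, i, c', d')) / sq (d i))"

definition Hunit :: "('l \<Rightarrow> 'l \<Rightarrow> 'l \<Rightarrow> bool) \<Rightarrow> ('l \<Rightarrow> real) \<Rightarrow> ('l hidx \<Rightarrow> complex)" where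
  "Hunit adm d = (\<lambda>(a, b, i, c, e). if c = a \<and> e = b \<and> admH adm (a, b, i, c, e) then sq (d i) else 0)"

definition Hcounit :: "'l::finite \<Rightarrow> ('l hidx \<Rightarrow> complex) \<Rightarrow> complex" where
  "Hcounit one x = (\<Sum>(a, c)\<in>UNIV. x (a, a, one, c, c))"

text \<open>Comultiplication, with values in H \<otimes> H represented as coefficient functions on pairs of
  index tuples:  \<Delta>(e^{ab}_{i;cd}) = \<Sum>_{j,k,p,q} sqrt(d_j d_k)/sqrt d_i F^{ajk}_{b;ip} F^{dkj}_{c;iq}
  e^{ap}_{j;cq} \<otimes> e^{pb}_{k;qd}, with j,k admissible with i.\<close>
definition Hcomult :: "('l::finite \<Rightarrow> 'l \<Rightarrow> 'l \<Rightarrow> bool) \<Rightarrow> ('l \<Rightarrow> real)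
    \<Rightarrow> ('l \<Rightarrow> 'l \<Rightarrow> 'l \<Rightarrow> 'l \<Rightarrow> 'l \<Rightarrow> 'l \<Rightarrow> complex)
    \<Rightarrow> ('l hidx \<Rightarrow> complex) \<Rightarrow> ('l hidx \<times> 'l hidx \<Rightarrow> complex)" where
  "Hcomult adm d F x = (\<lambda>((a, p, j, c, q), (p', b, k, q', e)).
      if p' = p \<and> q' = q then
        (\<Sum>i\<in>{i. adm j k i}. x (a, b, i, c, e) * sq (d j * d k) / sq (d i)
            * F a j k b i p * F e k j c i q)
      else 0)"

text \<open>Target counital map \<epsilon>_t(h) = \<epsilon>(\<eta>_(1) h) \<eta>_(2).\<close>
definition eps_t :: "'l::finite \<Rightarrow> ('l \<Rightarrow> 'l \<Rightarrow> 'l \<Rightarrow> bool) \<Rightarrow> ('l \<Rightarrow> real)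
    \<Rightarrow> ('l \<Rightarrow> 'l \<Rightarrow> 'l \<Rightarrow> 'l \<Rightarrow> 'l \<Rightarrow> 'l \<Rightarrow> complex)
    \<Rightarrow> ('l hidx \<Rightarrow> complex) \<Rightarrow> ('l hidx \<Rightarrow> complex)" where
  "eps_t one adm d F h = (\<lambda>t2. \<Sum>t1\<in>UNIV.
      Hcomult adm d F (Hunit adm d) (t1, t2) * Hcounit one (Hmult d (ebasis adm t1) h))"

definition Ht :: "'l::finite \<Rightarrow> ('l \<Rightarrow> 'l \<Rightarrow> 'l \<Rightarrow> bool) \<Rightarrow> ('l \<Rightarrow> real)
    \<Rightarrow> ('l \<Rightarrow> 'l \<Rightarrow> 'l \<Rightarrow> 'l \<Rightarrow> 'l \<Rightarrow> 'l \<Rightarrow> complex) \<Rightarrow> ('l hidx \<Rightarrow> complex) set" where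
  "Ht one adm d F = eps_t one adm d F ` Hspace adm"

definition Ht_act where
  "Ht_act one adm d F h z = eps_t one adm d F (Hmult d h z)"

text \<open>The simple module V_i: coefficient functions on pairs (a,b) with (i,a,b) admissible
  (basis v^{ab}_i), with e^{ab}_{j;cd} \<cdot> v^{pq}_i = \<delta>_{ij} \<delta>_{cp} \<delta>_{dq} / sqrt d_i  v^{ab}_i.\<close>
definition Vspace :: "('l \<Rightarrow> 'l \<Rightarrow> 'l \<Rightarrow> bool) \<Rightarrow> 'l \<Rightarrow> ('l \<times> 'l \<Rightarrow> complex) set" where
  "Vspace adm i = {v. \<forall>a b. \<not> adm a b i \<longrightarrow> v (a, b) = 0}"

definition V_act :: "('l::finite \<Rightarrow> real) \<Rightarrow> 'l \<Rightarrow> ('l hidx \<Rightarrow> complex) \<Rightarrow> ('l \<times> 'l \<Rightarrow> complex)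
    \<Rightarrow> ('l \<times> 'l \<Rightarrow> complex)" where
  "V_act d i h v = (\<lambda>(a, b). (\<Sum>(c, e)\<in>UNIV. h (a, b, i, c, e) * v (c, e)) / sq (d i))"

definition wvec :: "('l::finite \<Rightarrow> 'l \<Rightarrow> 'l \<Rightarrow> bool) \<Rightarrow> ('l \<Rightarrow> real) \<Rightarrow> 'l \<Rightarrow> ('l hidx \<Rightarrow> complex)" where
  "wvec adm d a = (\<lambda>t. \<Sum>(k, b)\<in>{(k, b). adm a k b}. sq (d k) / sq (d a) * ebasis adm (a, b, k, a, b) t)"

end

theory Submission
  imports Defs
begin


lemma vs_cscale: "vector_space (cscale :: complex \<Rightarrow> ('x \<Rightarrow> complex) \<Rightarrow> _)"
  by unfold_locales (auto simp: cscale_def algebra_simps fun_eq_iff)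

context fixes one adm d F assumes fd: "fusion_data one adm d F" begin
lemma fdA1: "\<forall>a b c. adm a b c \<longrightarrow> adm b a c"
  using fd unfolding fusion_data_def by (elim conjE) assumption
lemma fdA2: "\<forall>a b c. adm a b c \<longrightarrow> adm a c b"
  using fd unfolding fusion_data_def by (elim conjE) assumption
lemma fdA3: "\<forall>a b. adm a one b \<longleftrightarrow> a = b"
  using fd unfolding fusion_data_def by (elim conjE) assumption
lemma fdA4: "d one = 1"
  using fd unfolding fusion_data_def by (elim conjE) assumption
lemma fdA5: "\<forall>a. d a > 0"
  using fd unfolding fusion_data_def by (elim conjE) assumption
lemma fdA6: "\<forall>a j k b i p. F a j k b i p \<noteq> 0 \<longrightarrow> adm a j p \<and> adm p k b \<and> adm j k i \<and> adm a i b"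
  using fd unfolding fusion_data_def by (elim conjE) assumption
lemma fdA7: "\<forall>a j k b i p. adm a j p \<and> adm p k b \<and> adm j k i \<and> adm a i b \<and>
         (a = one \<or> j = one \<or> k = one) \<longrightarrow> F a j k b i p = 1"
  using fd unfolding fusion_data_def by (elim conjE) assumption
lemma fd1: "adm a b c \<Longrightarrow> adm b a c" using fdA1 by blast
lemma fd2: "adm a b c \<Longrightarrow> adm a c b" using fdA2 by blast
lemma fd3: "adm a one b \<longleftrightarrow> a = b" using fdA3 by blast
lemma fd4: "d one = 1" using fdA4 by blast
lemma fd5: "d a > 0" using fdA5 by blast
lemma fd6: "F a j k b i p \<noteq> 0 \<Longrightarrow> adm a j p \<and> adm p k b \<and> adm j k i \<and> adm a i b"
  using fdA6 by blast
lemma fd7: "adm a j p \<Longrightarrow> adm p k b \<Longrightarrow> adm j k i \<Longrightarrow> adm a i b \<Longrightarrow>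
         (a = one \<or> j = one \<or> k = one) \<Longrightarrow> F a j k b i p = 1"
  using fdA7 by blast
end
lemmas fd_facts = fd1 fd2 fd3 fd4 fd5 fd6 fd7

lemma sum_pair_UNIV: "(\<Sum>(x,y)\<in>UNIV. f x y) = (\<Sum>x\<in>(UNIV::'a::finite set). \<Sum>y\<in>(UNIV::'b::finite set). f x y)"
  unfolding UNIV_Times_UNIV[symmetric] sum.cartesian_product ..

lemma counit_mult:
  assumes "fusion_data one adm d F"
  shows "Hcounit one (Hmult d (ebasis adm (a,p,j,c,q)) h) =
     (if a = p \<and> j = one \<and> q = c then (\<Sum>c'\<in>UNIV. h (c,c,one,c',c')) else 0)"
proof -
  note f = fd_facts[OF assms]
  have e: "Hmult d (ebasis adm (a,p,j,c,q)) h (a',a',one,c',c') =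
      (if a' = a \<and> a = p \<and> j = one \<and> admH adm (a,p,j,c,q) then h (c,q,one,c',c') else 0)" for a' c'
  proof -
    have "(\<Sum>(x, y)\<in>UNIV. ebasis adm (a, p, j, c, q) (a', a', one, x, y) * h (x, y, one, c', c'))
       = (\<Sum>xy\<in>UNIV. if xy = (c,q) then (if a' = a \<and> a = p \<and> j = one \<and> admH adm (a,p,j,c,q) then h (c,q,one,c',c') else 0) else 0)"
      by (rule sum.cong[OF refl]) (auto simp: ebasis_def case_prod_beta)
    also have "\<dots> = (if a' = a \<and> a = p \<and> j = one \<and> admH adm (a,p,j,c,q) then h (c,q,one,c',c') else 0)"
      by simp
    finally show ?thesis by (simp add: Hmult_def f(4))
  qed
  have ad: "admH adm (a,a,one,c,c)" unfolding admH_def using fd3[OF assms, of a a] fd3[OF assms, of c c] fd1[OF assms, of c one c] by simp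
  have q: "a = p \<and> q = c" if "admH adm (a,p,one,c,q)"
  proof -
    have "adm a one p" "adm one q c" using that unfolding admH_def by auto
    then show ?thesis using fd3[OF assms, of a p] fd3[OF assms, of q c] fd1[OF assms, of one q c] by simp
  qed
  show ?thesis
  proof (cases "a = p \<and> j = one \<and> q = c")
    case True
    then have pa: "p = a" and jo: "j = one" and qc: "q = c" by auto
    have "Hcounit one (Hmult d (ebasis adm (a,p,j,c,q)) h) = (\<Sum>(a',c')\<in>UNIV. if a' = a then h(c,c,one,c',c') else 0)"
      unfolding Hcounit_def e unfolding qc pa jo using ad by simp
    also have "\<dots> = (\<Sum>a'\<in>UNIV. \<Sum>c'\<in>UNIV. if a' = a then h(c,c,one,c',c') else 0)"
      by (rule sum_pair_UNIV)
    also have "\<dots> = (\<Sum>a'\<in>UNIV. if a' = a then (\<Sum>c'\<in>UNIV. h(c,c,one,c',c')) else 0)"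
      by (rule sum.cong) auto
    finally show ?thesis unfolding pa jo qc by simp
  next
    case False
    have "Hcounit one (Hmult d (ebasis adm (a,p,j,c,q)) h) = 0"
    proof -
      have nc: "\<not> (a = p \<and> j = one \<and> admH adm (a,p,j,c,q))" using q False by blast
      show ?thesis unfolding Hcounit_def e
        by (rule sum.neutral) (use nc in auto)
    qed
    then show ?thesis by (simp only: if_not_P[OF False])
  qed
qed

lemma eps_t_eq:
  assumes fd: "fusion_data one adm d F"
  shows "eps_t one adm d F h (p',b,k,q',e) =
    (if q' = p' \<and> e = b \<and> adm p' k b then sq (d k) * (\<Sum>c'\<in>UNIV. h (p',p',one,c',c')) else 0)"
proof -
  define T0 where "T0 = (p',p',one,q',q')"
  define G where "G t1 = Hcomult adm d F (Hunit adm d) (t1, (p',b,k,q',e)) * Hcounit one (Hmult d (ebasis adm t1) h)" for t1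
  have st1: "G t1 = (if t1 = T0 then G T0 else 0)" for t1
  proof (cases "t1 = T0")
    case False
    obtain a p j c q where t1: "t1 = (a,p,j,c,q)" by (cases t1) auto
    have "Hcomult adm d F (Hunit adm d) (t1, (p',b,k,q',e)) = 0 \<or> Hcounit one (Hmult d (ebasis adm t1) h) = 0"
    proof (cases "p' = p \<and> q' = q")
      case True
      then have nc: "\<not> (a = p \<and> j = one \<and> q = c)" using False unfolding t1 T0_def by auto
      show ?thesis unfolding t1 counit_mult[OF fd] if_not_P[OF nc] by simp
    next
      case False
      show ?thesis unfolding t1 Hcomult_def case_prod_conv if_not_P[OF False] by simp
    qed
    then show ?thesis using False unfolding G_def by auto
  qed simp
  have "eps_t one adm d F h (p',b,k,q',e) = (\<Sum>t1\<in>UNIV. G t1)" unfolding eps_t_def G_def ..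
  also have "\<dots> = (\<Sum>t1\<in>UNIV. if t1 = T0 then G T0 else 0)" by (rule sum.cong[OF refl st1])
  also have "\<dots> = G T0" by simp
  finally have 1: "eps_t one adm d F h (p',b,k,q',e) = G T0" .
  have k1: "{i. adm one k i} = {k}"
  proof -
    have "adm one k i \<longleftrightarrow> k = i" for i
    proof
      assume "adm one k i"
      then have "adm k one i" by (rule fd1[OF fd])
      then show "k = i" using fd3[OF fd] by simp
    next
      assume "k = i"
      then show "adm one k i" using fd1[OF fd, of k one k] fd3[OF fd, of k k] by simp
    qed
    then show ?thesis by auto
  qed
  have "Hcomult adm d F (Hunit adm d) (T0, (p',b,k,q',e)) =
     Hunit adm d (p',b,k,q',e) * sq (d one * d k) / sq (d k) * F p' one k b k p' * F e k one q' k q'"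
    unfolding T0_def Hcomult_def case_prod_conv if_P[OF conjI[OF refl refl]] k1 by simp
  also have "\<dots> = (if q' = p' \<and> e = b \<and> adm p' k b then sq (d k) else 0)"
  proof (cases "q' = p' \<and> e = b \<and> adm p' k b")
    case True
    then have qp: "q' = p'" and eb: "e = b" and pkb: "adm p' k b" by auto
    have kbp: "adm k b p'" using fd2[OF fd, OF fd1[OF fd, OF pkb]] .
    have bkp: "adm b k p'" using fd1[OF fd, OF kbp] .
    have okk: "adm one k k" using fd1[OF fd, of k one k] fd3[OF fd, of k k] by simp
    have pop: "adm p' one p'" using fd3[OF fd] by simp
    have koo: "adm k one k" using fd3[OF fd] by simp
    have F1: "F p' one k b k p' = 1" by (rule fd7[OF fd pop pkb okk pkb]) simp
    have F2: "F b k one p' k p' = 1" by (rule fd7[OF fd bkp pop koo bkp]) simp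
    have H: "Hunit adm d (p',b,k,q',e) = sq (d k)" unfolding qp eb Hunit_def admH_def using pkb kbp by simp
    have dk: "sq (d k) \<noteq> 0" using fd5[OF fd, of k] by simp
    show ?thesis unfolding H using True F1 F2 dk unfolding qp eb by (simp add: fd4[OF fd])
  next
    case False
    have "Hunit adm d (p',b,k,q',e) = 0" using False unfolding Hunit_def admH_def by auto
    then show ?thesis unfolding if_not_P[OF False] by simp
  qed
  finally show ?thesis unfolding 1 G_def counit_mult[OF fd] T0_def by simp
qed


interpretation cs: vector_space "cscale :: complex \<Rightarrow> ('x \<Rightarrow> complex) \<Rightarrow> ('x \<Rightarrow> complex)"
  by (rule vs_cscale)

lemma sum_app: "finite A \<Longrightarrow> (\<Sum>a\<in>A. f a) x = (\<Sum>a\<in>A. f a x)"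
  by (induction A rule: finite_induct) (auto simp: plus_fun_def zero_fun_def)

definition Wf :: "('l \<Rightarrow> 'l \<Rightarrow> 'l \<Rightarrow> bool) \<Rightarrow> ('l \<Rightarrow> real) \<Rightarrow> ('l \<Rightarrow> complex) \<Rightarrow> 'l hidx \<Rightarrow> complex" where
  "Wf adm d \<mu> = (\<lambda>(p,b,k,q,e). if q = p \<and> e = b \<and> adm p k b then sq (d k) * \<mu> p else 0)"
definition Lf :: "'l::finite \<Rightarrow> ('l hidx \<Rightarrow> complex) \<Rightarrow> 'l \<Rightarrow> complex" where
  "Lf one h = (\<lambda>a. \<Sum>c\<in>UNIV. h (a,a,one,c,c))"
definition Df :: "('l \<Rightarrow> complex) \<Rightarrow> 'l \<times> 'l \<Rightarrow> complex" where
  "Df \<mu> = (\<lambda>(a,b). if a = b then \<mu> a else 0)"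
definition phi :: "'l \<Rightarrow> ('l hidx \<Rightarrow> complex) \<Rightarrow> 'l \<times> 'l \<Rightarrow> complex" where
  "phi one z = (\<lambda>(a,b). if a = b then z (a,a,one,a,a) else 0)"
definition hmu :: "'l \<Rightarrow> ('l \<Rightarrow> complex) \<Rightarrow> 'l hidx \<Rightarrow> complex" where
  "hmu one \<mu> = (\<lambda>(a,b,i,c,e). if b = a \<and> i = one \<and> c = a \<and> e = a then \<mu> a else 0)"
definition dl :: "'l \<Rightarrow> 'l \<Rightarrow> complex" where "dl a = (\<lambda>p. if p = a then 1 else 0)"

context fixes one adm d F assumes fd: "fusion_data one adm d F" begin

lemma L1: "eps_t one adm d F h = Wf adm d (Lf one h)"
proof
  fix t :: "'a hidx"
  obtain p b k q e where t: "t = (p,b,k,q,e)" by (cases t) auto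
  show "eps_t one adm d F h t = Wf adm d (Lf one h) t"
    unfolding t eps_t_eq[OF fd] Wf_def Lf_def by auto
qed

lemma L2: "hmu one \<mu> \<in> Hspace adm" "Lf one (hmu one \<mu>) = \<mu>"
proof -
  have ad: "admH adm (a,a,one,a,a)" for a
    unfolding admH_def using fd3[OF fd, of a a] fd1[OF fd, of a one a] by simp
  show "hmu one \<mu> \<in> Hspace adm" unfolding Hspace_def hmu_def using ad by auto
  show "Lf one (hmu one \<mu>) = \<mu>"
  proof
    fix a
    have "(\<Sum>c\<in>UNIV. hmu one \<mu> (a,a,one,c,c)) = (\<Sum>c\<in>UNIV. if c = a then \<mu> a else 0)"
      by (rule sum.cong) (auto simp: hmu_def)
    then show "Lf one (hmu one \<mu>) a = \<mu> a" unfolding Lf_def by simp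
  qed
qed

lemma L3: "Ht one adm d F = range (Wf adm d)"
proof
  show "Ht one adm d F \<subseteq> range (Wf adm d)" unfolding Ht_def L1 by auto
  show "range (Wf adm d) \<subseteq> Ht one adm d F"
  proof
    fix z assume "z \<in> range (Wf adm d)"
    then obtain \<mu> where z: "z = Wf adm d \<mu>" by auto
    have "z = eps_t one adm d F (hmu one \<mu>)" unfolding z L1 L2(2) ..
    then show "z \<in> Ht one adm d F" unfolding Ht_def using L2(1) by auto
  qed
qed

lemma L5: "Wf adm d \<mu> (p,p,one,p,p) = \<mu> p"
  unfolding Wf_def using fd3[OF fd, of p p] fd4[OF fd] by simp

end

lemma L4: "Wf adm d (\<lambda>a. \<mu> a + \<nu> a) = Wf adm d \<mu> + Wf adm d \<nu>"
  "Wf adm d (\<lambda>a. c * \<mu> a) = cscale c (Wf adm d \<mu>)"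
  "Wf adm d (\<lambda>a. 0) = 0"
  by (auto simp: Wf_def cscale_def plus_fun_def fun_eq_iff algebra_simps)

lemma L7: fixes \<mu> :: "'a::finite \<Rightarrow> complex" shows "Wf adm d \<mu> = (\<Sum>a\<in>UNIV. cscale (\<mu> a) (Wf adm d (dl a)))"
proof
  fix t :: "'a hidx"
  obtain p b k q e where t: "t = (p,b,k,q,e)" by (cases t) auto
  have "(\<Sum>a\<in>UNIV. cscale (\<mu> a) (Wf adm d (dl a))) t = (\<Sum>a\<in>UNIV. \<mu> a * Wf adm d (dl a) t)"
    by (simp add: sum_app cscale_def)
  also have "\<dots> = (\<Sum>a\<in>UNIV. if a = p then Wf adm d \<mu> t else 0)"
    by (rule sum.cong) (auto simp: t Wf_def dl_def)
  finally show "Wf adm d \<mu> t = (\<Sum>a\<in>UNIV. cscale (\<mu> a) (Wf adm d (dl a))) t" by simp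
qed

lemma Dlin: "Df (\<lambda>a. \<mu> a + \<nu> a) = Df \<mu> + Df \<nu>"
  "Df (\<lambda>a. c * \<mu> a) = cscale c (Df \<mu>)"
  "Df (\<lambda>a. 0) = 0"
  by (auto simp: Df_def cscale_def plus_fun_def fun_eq_iff algebra_simps)

lemma D7: fixes \<mu> :: "'a::finite \<Rightarrow> complex" shows "Df \<mu> = (\<Sum>a\<in>UNIV. cscale (\<mu> a) (Df (dl a)))"
proof
  fix t :: "'a \<times> 'a"
  obtain p b where t: "t = (p,b)" by (cases t) auto
  have "(\<Sum>a\<in>UNIV. cscale (\<mu> a) (Df (dl a))) t = (\<Sum>a\<in>UNIV. \<mu> a * Df (dl a) t)"
    by (simp add: sum_app cscale_def)
  also have "\<dots> = (\<Sum>a\<in>UNIV. if a = p then Df \<mu> t else 0)"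
    by (rule sum.cong) (auto simp: t Df_def dl_def)
  finally show "Df \<mu> t = (\<Sum>a\<in>UNIV. cscale (\<mu> a) (Df (dl a))) t" by simp
qed


lemma basis_lemma:
  fixes g :: "'l::finite \<Rightarrow> ('x \<Rightarrow> complex)" and pt :: "'l \<Rightarrow> 'x"
  assumes gp: "\<And>a b. g a (pt b) = (if a = b then 1 else 0)"
  shows "cs.independent (range g)" "card (range g) = CARD('l)"
proof -
  have inj: "inj g"
  proof
    fix a b assume "g a = g b"
    then have "g a (pt a) = g b (pt a)" by simp
    then show "a = b" using gp[of a a] gp[of b a] by (auto split: if_splits)
  qed
  then show "card (range g) = CARD('l)" by (simp add: card_image)
  show "cs.independent (range g)"
  proof (rule cs.independent_if_scalars_zero)
    show "finite (range g)" by simp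
    fix f x assume s: "(\<Sum>x\<in>range g. cscale (f x) x) = 0" and x: "x \<in> range g"
    then obtain b where xb: "x = g b" by auto
    have "(\<Sum>x\<in>range g. cscale (f x) x) = (\<Sum>a\<in>UNIV. cscale (f (g a)) (g a))"
      by (simp add: sum.reindex[OF inj])
    then have z: "(\<Sum>a\<in>UNIV. cscale (f (g a)) (g a)) = 0" using s by simp
    have "(\<Sum>a\<in>UNIV. cscale (f (g a)) (g a)) (pt b) = (0::'x\<Rightarrow>complex) (pt b)" unfolding z ..
    then have "(\<Sum>a\<in>UNIV. cscale (f (g a)) (g a)) (pt b) = 0" by (simp add: zero_fun_def)
    then have "(\<Sum>a\<in>UNIV. f (g a) * g a (pt b)) = 0" by (simp add: sum_app cscale_def)
    moreover have "(\<Sum>a\<in>UNIV. f (g a) * g a (pt b)) = (\<Sum>a\<in>UNIV. if a = b then f (g b) else 0)"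
      by (rule sum.cong) (auto simp: gp)
    ultimately show "f x = 0" using xb by simp
  qed
qed

lemma sub_W: "cs.subspace (range (Wf adm d))"
proof (rule cs.subspaceI)
  have "0 = Wf adm d (\<lambda>a. 0)" using L4(3) by simp
  then show "0 \<in> range (Wf adm d)" by blast
  fix x y assume "x \<in> range (Wf adm d)" "y \<in> range (Wf adm d)"
  then obtain \<mu> \<nu> where "x = Wf adm d \<mu>" "y = Wf adm d \<nu>" by auto
  then have "x + y = Wf adm d (\<lambda>a. \<mu> a + \<nu> a)" by (simp add: L4(1))
  then show "x + y \<in> range (Wf adm d)" by blast
next
  fix c x assume "x \<in> range (Wf adm d)"
  then obtain \<mu> where "x = Wf adm d \<mu>" by auto
  then have "cscale c x = Wf adm d (\<lambda>a. c * \<mu> a)" by (simp add: L4(2))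
  then show "cscale c x \<in> range (Wf adm d)" by blast
qed

lemma sub_D: "cs.subspace (range (Df :: ('a \<Rightarrow> complex) \<Rightarrow> _))"
proof (rule cs.subspaceI)
  have "0 = Df (\<lambda>a::'a. 0)" using Dlin(3) by simp
  then show "0 \<in> range (Df :: ('a \<Rightarrow> complex) \<Rightarrow> _)" by blast
  fix x y :: "'a \<times> 'a \<Rightarrow> complex" assume "x \<in> range Df" "y \<in> range Df"
  then obtain \<mu> \<nu> where "x = Df \<mu>" "y = Df \<nu>" by auto
  then have "x + y = Df (\<lambda>a. \<mu> a + \<nu> a)" by (simp add: Dlin(1))
  then show "x + y \<in> range Df" by blast
next
  fix c and x :: "'a \<times> 'a \<Rightarrow> complex" assume "x \<in> range Df"
  then obtain \<mu> where "x = Df \<mu>" by auto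
  then have "cscale c x = Df (\<lambda>a. c * \<mu> a)" by (simp add: Dlin(2))
  then show "cscale c x \<in> range Df" by blast
qed

lemma span_W: "cs.span (range (\<lambda>a::'a::finite. Wf adm d (dl a))) = range (Wf adm d)"
proof
  show "cs.span (range (\<lambda>a. Wf adm d (dl a))) \<subseteq> range (Wf adm d)"
    by (rule cs.span_minimal[OF _ sub_W]) auto
  show "range (Wf adm d) \<subseteq> cs.span (range (\<lambda>a::'a. Wf adm d (dl a)))"
  proof
    fix z assume "z \<in> range (Wf adm d)"
    then obtain \<mu> :: "'a \<Rightarrow> complex" where z: "z = Wf adm d \<mu>" by auto
    show "z \<in> cs.span (range (\<lambda>a. Wf adm d (dl a)))" unfolding z L7[of adm d \<mu>]
      by (intro cs.span_sum cs.span_scale cs.span_base) auto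
  qed
qed

lemma span_D: "cs.span (range (\<lambda>a::'a::finite. Df (dl a))) = range Df"
proof
  show "cs.span (range (\<lambda>a. Df (dl a))) \<subseteq> range Df"
    by (rule cs.span_minimal[OF _ sub_D]) auto
  show "range Df \<subseteq> cs.span (range (\<lambda>a::'a. Df (dl a)))"
  proof
    fix z assume "z \<in> range (Df :: ('a \<Rightarrow> complex) \<Rightarrow> _)"
    then obtain \<mu> :: "'a \<Rightarrow> complex" where z: "z = Df \<mu>" by auto
    show "z \<in> cs.span (range (\<lambda>a. Df (dl a)))" unfolding z D7[of \<mu>]
      by (intro cs.span_sum cs.span_scale cs.span_base) auto
  qed
qed

context fixes one adm d F assumes fd: "fusion_data one adm d F" begin

lemma adm_rot: "adm a k b \<Longrightarrow> adm k b a"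
  using fd2[OF fd, OF fd1[OF fd]] .

lemma L6: "wvec adm d a = cscale (1 / sq (d a)) (Wf adm d (dl a))"
proof
  fix t :: "'a hidx"
  obtain p b k q e where t: "t = (p,b,k,q,e)" by (cases t) auto
  have ah: "admH adm (a,b0,k0,a,b0)" if "adm a k0 b0" for k0 b0
    unfolding admH_def using adm_rot[OF that] that by simp
  have "wvec adm d a t = (\<Sum>x\<in>{(k,b). adm a k b}. if x = (k,b) then (if p = a \<and> q = a \<and> e = b then sq (d k) / sq (d a) else 0) else 0)"
    unfolding wvec_def t by (rule sum.cong[OF refl]) (auto simp: ebasis_def ah split: if_splits)
  also have "\<dots> = (if p = a \<and> q = a \<and> e = b \<and> adm a k b then sq (d k) / sq (d a) else 0)"
    by simp
  finally show "wvec adm d a t = cscale (1 / sq (d a)) (Wf adm d (dl a)) t"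
    unfolding t cscale_def Wf_def dl_def by auto
qed

lemma L8: "Hmult d h (Wf adm d \<mu>) (a,a,one,c',c') = h (a,a,one,c',c') * \<mu> c'"
proof -
  have "(\<Sum>(c,e)\<in>UNIV. h (a,a,one,c,e) * Wf adm d \<mu> (c,e,one,c',c')) = (\<Sum>x\<in>UNIV. if x = (c',c') then h (a,a,one,c',c') * \<mu> c' else 0)"
    by (rule sum.cong[OF refl]) (auto simp: Wf_def fd3[OF fd] fd4[OF fd] split: if_splits)
  then show ?thesis unfolding Hmult_def by (simp add: fd4[OF fd])
qed

lemma L10: "Ht_act one adm d F h (Wf adm d \<mu>) = Wf adm d (\<lambda>a. \<Sum>c\<in>UNIV. h (a,a,one,c,c) * \<mu> c)"
  unfolding Ht_act_def L1[OF fd] Lf_def L8 ..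

lemma L11: assumes h: "h \<in> Hspace adm"
  shows "V_act d one h (Df \<mu>) = Df (\<lambda>a. \<Sum>c\<in>UNIV. h (a,a,one,c,c) * \<mu> c)"
proof
  fix t :: "'a \<times> 'a"
  obtain a b where t: "t = (a,b)" by (cases t) auto
  have "(\<Sum>(c,e)\<in>UNIV. h (a,b,one,c,e) * Df \<mu> (c,e)) = (\<Sum>c\<in>UNIV. \<Sum>e\<in>UNIV. h (a,b,one,c,e) * Df \<mu> (c,e))"
    by (rule sum_pair_UNIV)
  also have "\<dots> = (\<Sum>c\<in>UNIV. \<Sum>e\<in>UNIV. if e = c then h (a,b,one,c,c) * \<mu> c else 0)"
    by (intro sum.cong refl) (auto simp: Df_def)
  also have "\<dots> = (\<Sum>c\<in>UNIV. h (a,b,one,c,c) * \<mu> c)" by simp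
  also have "\<dots> = Df (\<lambda>a. \<Sum>c\<in>UNIV. h (a,a,one,c,c) * \<mu> c) (a,b)"
  proof (cases "a = b")
    case False
    have "h (a,b,one,c,c) = 0" for c
    proof -
      have "\<not> admH adm (a,b,one,c,c)" unfolding admH_def using fd3[OF fd, of a b] False by simp
      then show ?thesis using h unfolding Hspace_def by blast
    qed
    then show ?thesis using False by (simp add: Df_def)
  qed (simp add: Df_def)
  finally show "V_act d one h (Df \<mu>) t = Df (\<lambda>a. \<Sum>c\<in>UNIV. h (a,a,one,c,c) * \<mu> c) t"
    unfolding t V_act_def by (simp add: fd4[OF fd])
qed

lemma Lphi: "phi one (Wf adm d \<mu>) = Df \<mu>"
  unfolding phi_def Df_def using L5[OF fd] by auto

lemma LV: "Vspace adm one = range Df"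
proof
  have aa: "adm a a one" for a using fd2[OF fd, of a one a] fd3[OF fd, of a a] by simp
  show "range Df \<subseteq> Vspace adm one" unfolding Vspace_def Df_def using aa by auto
  show "Vspace adm one \<subseteq> range Df"
  proof
    fix v assume v: "v \<in> Vspace adm one"
    have "v = Df (\<lambda>a. v (a,a))"
    proof
      fix t :: "'a \<times> 'a"
      obtain a b where t: "t = (a,b)" by (cases t) auto
      show "v t = Df (\<lambda>a. v (a, a)) t"
      proof (cases "a = b")
        case False
        then have "\<not> adm a b one" using fd2[OF fd, of a b one] fd3[OF fd, of a b] by auto
        then show ?thesis using v False unfolding t Vspace_def Df_def by auto
      qed (simp add: t Df_def)
    qed
    then show "v \<in> range Df" by blast
  qed
qed

end


theorem mainTheorem10:
  fixes one :: "'l::finite"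
    and adm :: "'l \<Rightarrow> 'l \<Rightarrow> 'l \<Rightarrow> bool"
    and d :: "'l \<Rightarrow> real"
    and F :: "'l \<Rightarrow> 'l \<Rightarrow> 'l \<Rightarrow> 'l \<Rightarrow> 'l \<Rightarrow> 'l \<Rightarrow> complex"
  assumes "fusion_data one adm d F"
  shows "Ht one adm d F = module.span cscale (range (wvec adm d)) \<and>
         vector_space.dim cscale (Ht one adm d F) = vector_space.dim cscale (Vspace adm one) \<and>
         (\<exists>\<phi>. Vector_Spaces.linear cscale cscale \<phi> \<and> bij_betw \<phi> (Ht one adm d F) (Vspace adm one) \<and>
           (\<forall>h\<in>Hspace adm. \<forall>z\<in>Ht one adm d F.
              \<phi> (Ht_act one adm d F h z) = V_act d one h (\<phi> z))) \<and>
         Ht one adm d F \<noteq> {\<lambda>_. 0} \<and>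
         (\<forall>W. module.subspace cscale W \<and> W \<subseteq> Ht one adm d F \<and>
              (\<forall>h\<in>Hspace adm. \<forall>z\<in>W. Ht_act one adm d F h z \<in> W)
           \<longrightarrow> W = {\<lambda>_. 0} \<or> W = Ht one adm d F)"
proof -
  note fd = assms
  have Ht: "Ht one adm d F = range (Wf adm d)" by (rule L3[OF fd])
  have sqnz: "sq (d a) \<noteq> 0" for a using fd5[OF fd, of a] by simp
  have wv: "wvec adm d a = Wf adm d (\<lambda>p. 1 / sq (d a) * dl a p)" for a
    unfolding L6[OF fd] L4(2) ..
  have wv2: "Wf adm d (dl a) = cscale (sq (d a)) (wvec adm d a)" for a
    unfolding L6[OF fd] using sqnz[of a] by (simp add: cscale_def fun_eq_iff)
  have spanW: "range (Wf adm d) = cs.span (range (\<lambda>a. Wf adm d (dl a)))" by (rule span_W[symmetric])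
  have P1: "Ht one adm d F = cs.span (range (wvec adm d))"
  proof
    show "Ht one adm d F \<subseteq> cs.span (range (wvec adm d))"
      unfolding Ht spanW
    proof (rule cs.span_minimal[OF _ cs.subspace_span])
      show "range (\<lambda>a. Wf adm d (dl a)) \<subseteq> cs.span (range (wvec adm d))"
        unfolding wv2 by (auto intro!: cs.span_scale[OF cs.span_base])
    qed
    show "cs.span (range (wvec adm d)) \<subseteq> Ht one adm d F"
      unfolding Ht by (rule cs.span_minimal[OF _ sub_W]) (auto simp: wv)
  qed
  have sW: "cs.span (range (Wf adm d)) = range (Wf adm d)" using sub_W by simp
  have sD: "cs.span (range (Df :: ('l \<Rightarrow> complex) \<Rightarrow> _)) = range Df" using sub_D by simp
  have bW: "(Wf adm d (dl a)) ((\<lambda>b. (b,b,one,b,b)) b) = (if a = b then 1 else 0)" for a b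
    unfolding L5[OF fd] dl_def by auto
  have bD: "(Df (dl a)) ((\<lambda>b. (b,b)) b) = (if a = b then 1 else 0)" for a b :: 'l
    unfolding Df_def dl_def by auto
  have "cs.dim (range (Wf adm d)) = card (range (\<lambda>a. Wf adm d (dl a)))"
  proof (rule cs.dim_eq_card)
    show "cs.span (range (\<lambda>a. Wf adm d (dl a))) = cs.span (range (Wf adm d))"
      by (simp only: span_W sW)
    show "cs.independent (range (\<lambda>a. Wf adm d (dl a)))"
      by (rule basis_lemma(1)[of "\<lambda>a. Wf adm d (dl a)" "\<lambda>b. (b,b,one,b,b)", OF bW])
  qed
  then have dimW: "cs.dim (range (Wf adm d)) = CARD('l)"
    using basis_lemma(2)[of "\<lambda>a. Wf adm d (dl a)" "\<lambda>b. (b,b,one,b,b)", OF bW] by simp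
  have "cs.dim (range (Df :: ('l \<Rightarrow> complex) \<Rightarrow> _)) = card (range (\<lambda>a::'l. Df (dl a)))"
  proof (rule cs.dim_eq_card)
    show "cs.span (range (\<lambda>a::'l. Df (dl a))) = cs.span (range (Df :: ('l \<Rightarrow> complex) \<Rightarrow> _))"
      by (simp only: span_D sD)
    show "cs.independent (range (\<lambda>a::'l. Df (dl a)))"
      by (rule basis_lemma(1)[of "\<lambda>a. Df (dl a)" "\<lambda>b. (b,b)", OF bD])
  qed
  then have dimD: "cs.dim (range (Df :: ('l \<Rightarrow> complex) \<Rightarrow> _)) = CARD('l)"
    using basis_lemma(2)[of "\<lambda>a. Df (dl a)" "\<lambda>b. (b,b)", OF bD] by simp
  have P2: "cs.dim (Ht one adm d F) = cs.dim (Vspace adm one)"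
    unfolding Ht LV[OF fd] dimW dimD ..
  have lin: "Vector_Spaces.linear cscale cscale (phi one)"
    unfolding Vector_Spaces.linear_iff
    by (auto simp: vs_cscale phi_def plus_fun_def cscale_def fun_eq_iff)
  have inj: "inj_on (phi one) (range (Wf adm d))"
  proof
    fix x y assume "x \<in> range (Wf adm d)" "y \<in> range (Wf adm d)" and e: "phi one x = phi one y"
    then obtain \<mu> \<nu> where x: "x = Wf adm d \<mu>" and y: "y = Wf adm d \<nu>" by auto
    have DD: "Df \<mu> = Df \<nu>" using e unfolding x y Lphi[OF fd] .
    have "\<mu> a = \<nu> a" for a
    proof -
      have "Df \<mu> (a,a) = Df \<nu> (a,a)" using DD by simp
      then show ?thesis by (simp add: Df_def)
    qed
    then have "\<mu> = \<nu>" by (simp add: fun_eq_iff)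
    then show "x = y" unfolding x y by simp
  qed
  have img: "phi one ` range (Wf adm d) = Vspace adm one"
    unfolding LV[OF fd] image_image Lphi[OF fd] ..
  have act: "phi one (Ht_act one adm d F h z) = V_act d one h (phi one z)"
    if h: "h \<in> Hspace adm" and z: "z \<in> Ht one adm d F" for h z
  proof -
    obtain \<mu> where z: "z = Wf adm d \<mu>" using z unfolding Ht by auto
    show ?thesis unfolding z L10[OF fd] Lphi[OF fd] L11[OF fd h] ..
  qed
  have P3: "\<exists>\<phi>. Vector_Spaces.linear cscale cscale \<phi> \<and> bij_betw \<phi> (Ht one adm d F) (Vspace adm one) \<and>
           (\<forall>h\<in>Hspace adm. \<forall>z\<in>Ht one adm d F.
              \<phi> (Ht_act one adm d F h z) = V_act d one h (\<phi> z))"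
    using lin inj img act unfolding Ht bij_betw_def by blast
  have P4: "Ht one adm d F \<noteq> {\<lambda>_. 0}"
  proof
    assume "Ht one adm d F = {\<lambda>_. 0}"
    then have "Wf adm d (\<lambda>_. 1) = (\<lambda>_. 0)" unfolding Ht by auto
    then have "Wf adm d (\<lambda>_. 1) (one,one,one,one,one) = 0" by simp
    then show False unfolding L5[OF fd] by simp
  qed
  have P5: "W = {\<lambda>_. 0} \<or> W = Ht one adm d F"
    if sub: "cs.subspace W" and WH: "W \<subseteq> Ht one adm d F"
      and inv: "\<forall>h\<in>Hspace adm. \<forall>z\<in>W. Ht_act one adm d F h z \<in> W" for W
  proof (cases "\<forall>z\<in>W. z = 0")
    case True
    have "0 \<in> W" using cs.subspace_0[OF sub] .
    then have "W = {0}" using True by auto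
    then show ?thesis by (simp add: zero_fun_def)
  next
    case False
    then obtain z where zW: "z \<in> W" and z0: "z \<noteq> 0" by auto
    obtain \<mu> where z: "z = Wf adm d \<mu>" using zW WH unfolding Ht by auto
    obtain c where mc: "\<mu> c \<noteq> 0"
    proof (rule ccontr)
      assume "\<not> thesis"
      then have "\<mu> = (\<lambda>_. 0)" using that by auto
      then show False using z0 L4(3)[of adm d] unfolding z by simp
    qed
    have base: "Wf adm d (dl a) \<in> W" for a
    proof -
      define h where "h = (\<lambda>t. if t = (a,a,one,c,c) then (1::complex) else 0)"
      have ad: "admH adm (a,a,one,c,c)"
        unfolding admH_def using fd3[OF fd, of a a] fd3[OF fd, of c c] fd1[OF fd, of c one c] by simp
      have hH: "h \<in> Hspace adm" unfolding Hspace_def h_def using ad by auto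
      have nu: "(\<lambda>a'. \<Sum>c'\<in>UNIV. h (a',a',one,c',c') * \<mu> c') = (\<lambda>a'. \<mu> c * dl a a')"
      proof
        fix a'
        have "(\<Sum>c'\<in>UNIV. h (a',a',one,c',c') * \<mu> c') = (\<Sum>c'\<in>UNIV. if c' = c then \<mu> c * dl a a' else 0)"
          by (rule sum.cong) (auto simp: h_def dl_def)
        then show "(\<Sum>c'\<in>UNIV. h (a',a',one,c',c') * \<mu> c') = \<mu> c * dl a a'" by simp
      qed
      have "Ht_act one adm d F h z \<in> W" using inv hH zW by blast
      then have "cscale (\<mu> c) (Wf adm d (dl a)) \<in> W" unfolding z L10[OF fd] nu L4(2) .
      then have "cscale (1 / \<mu> c) (cscale (\<mu> c) (Wf adm d (dl a))) \<in> W"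
        by (rule cs.subspace_scale[OF sub])
      then show ?thesis using mc by (simp add: cscale_def fun_eq_iff)
    qed
    have "Ht one adm d F \<subseteq> W" unfolding Ht spanW
      by (rule cs.span_minimal[OF _ sub]) (auto intro: base)
    then show ?thesis using WH by auto
  qed
  show ?thesis using P1 P2 P3 P4 P5 by blast
qed

end
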